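(* Let $G$ be a finite simple graph on $[d]$. Then $K_G=\langle [I_G]_2\rangle+M_G$.
   Context: A stable set of $G$ is a subset of $[d]$ with no edge of $G$ (including $\emptyset$ and singletons); $S(G)$ is the set of stable sets; $R[G]=\mathbb{K}[x_S : S\in S(G)]$ over a field $\mathbb{K}$, all variables of degree $1$. $I_G$ is the kernel of $\pi:R[G]\to\mathbb{K}[t_1,\dots,t_d,s]$, $\pi(x_S)=s\prod_{j\in S}t_j$; $\langle [I_G]_2\rangle$ is the ideal generated by the degree-$2$ homogeneous elements of $I_G$. $J_G$ is the ideal generated by all $x_{S_1}x_{S_2}-x_{S_3}x_{S_4}$ with $S_i\in S(G)$, $S_1\cap S_2=S_3\cap S_4=\emptyset$, $S_1\cup S_2=S_3\cup S_4$. $M_G=\langle x_Sx_T : S,T\in S(G),\ S\cap T\neq\emptyset\rangle$ and $K_G=J_G+M_G$. *)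

theory Defs
  imports "HOL-Library.Poly_Mapping"
begin

(* Polynomials over a field in variables indexed by subsets of nat
(x_S for a set S) are elements of type ((nat set \<Rightarrow>\<^sub>0 nat) \<Rightarrow>\<^sub>0 'k);
monomials are exponent vectors.  The target ring K[t_1..t_d, s] is
((nat \<Rightarrow>\<^sub>0 nat) \<Rightarrow>\<^sub>0 'k) with t_j the variable j (1 \<le> j \<le> d) and s the variable 0. *)

type_synonym 'k mpoly_sets = "(nat set \<Rightarrow>\<^sub>0 nat) \<Rightarrow>\<^sub>0 'k"
type_synonym 'k mpoly_nat = "(nat \<Rightarrow>\<^sub>0 nat) \<Rightarrow>\<^sub>0 'k"

definition simple_graph_on :: "nat \<Rightarrow> nat set set \<Rightarrow> bool" where
  "simple_graph_on d E \<longleftrightarrow> (\<forall>e\<in>E. e \<subseteq> {1..d} \<and> card e = 2)"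

definition stable_sets :: "nat \<Rightarrow> nat set set \<Rightarrow> nat set set" where
  "stable_sets d E = {S. S \<subseteq> {1..d} \<and> (\<forall>e\<in>E. \<not> e \<subseteq> S)}"

definition var :: "nat set \<Rightarrow> 'k::comm_ring_1 mpoly_sets" where
  "var S = Poly_Mapping.single (Poly_Mapping.single S 1) 1"

definition RG :: "nat \<Rightarrow> nat set set \<Rightarrow> 'k::comm_ring_1 mpoly_sets set" where
  "RG d E = {p. \<forall>\<alpha>\<in>Poly_Mapping.keys p. Poly_Mapping.keys \<alpha> \<subseteq> stable_sets d E}"

definition mdeg :: "(nat set \<Rightarrow>\<^sub>0 nat) \<Rightarrow> nat" where
  "mdeg \<alpha> = (\<Sum>S\<in>Poly_Mapping.keys \<alpha>. Poly_Mapping.lookup \<alpha> S)"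

definition homogeneous_of :: "nat \<Rightarrow> 'k::comm_ring_1 mpoly_sets \<Rightarrow> bool" where
  "homogeneous_of n p \<longleftrightarrow> (\<forall>\<alpha>\<in>Poly_Mapping.keys p. mdeg \<alpha> = n)"

definition pi_exp :: "(nat set \<Rightarrow>\<^sub>0 nat) \<Rightarrow> (nat \<Rightarrow>\<^sub>0 nat)" where
  "pi_exp \<alpha> = (\<Sum>S\<in>Poly_Mapping.keys \<alpha>. Poly_Mapping.single 0 (Poly_Mapping.lookup \<alpha> S)
                 + (\<Sum>j\<in>S. Poly_Mapping.single j (Poly_Mapping.lookup \<alpha> S)))"

(* The K-algebra homomorphism \<pi> : x_S \<mapsto> s * prod_{j\<in>S} t_j, extended linearly. *)
definition piG :: "'k::comm_ring_1 mpoly_sets \<Rightarrow> 'k mpoly_nat" where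
  "piG p = (\<Sum>\<alpha>\<in>Poly_Mapping.keys p. Poly_Mapping.single (pi_exp \<alpha>) (Poly_Mapping.lookup p \<alpha>))"

definition IG :: "nat \<Rightarrow> nat set set \<Rightarrow> 'k::comm_ring_1 mpoly_sets set" where
  "IG d E = {p \<in> RG d E. piG p = 0}"

definition ideal_gen :: "'k::comm_ring_1 mpoly_sets set \<Rightarrow> 'k mpoly_sets set \<Rightarrow> 'k mpoly_sets set" where
  "ideal_gen R X = {p. \<exists>F r. finite F \<and> F \<subseteq> X \<and> (\<forall>g\<in>F. r g \<in> R) \<and> p = (\<Sum>g\<in>F. r g * g)}"

definition ideal_sum :: "'a::plus set \<Rightarrow> 'a set \<Rightarrow> 'a set" where
  "ideal_sum I J = {a + b | a b. a \<in> I \<and> b \<in> J}"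

definition JG :: "nat \<Rightarrow> nat set set \<Rightarrow> 'k::comm_ring_1 mpoly_sets set" where
  "JG d E = ideal_gen (RG d E)
     {var S1 * var S2 - var S3 * var S4 | S1 S2 S3 S4.
        S1 \<in> stable_sets d E \<and> S2 \<in> stable_sets d E \<and> S3 \<in> stable_sets d E \<and> S4 \<in> stable_sets d E
        \<and> S1 \<inter> S2 = {} \<and> S3 \<inter> S4 = {} \<and> S1 \<union> S2 = S3 \<union> S4}"

definition MG :: "nat \<Rightarrow> nat set set \<Rightarrow> 'k::comm_ring_1 mpoly_sets set" where
  "MG d E = ideal_gen (RG d E)
     {var S * var T | S T. S \<in> stable_sets d E \<and> T \<in> stable_sets d E \<and> S \<inter> T \<noteq> {}}"

definition KG :: "nat \<Rightarrow> nat set set \<Rightarrow> 'k::comm_ring_1 mpoly_sets set" where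
  "KG d E = ideal_sum (JG d E) (MG d E)"

end

theory Submission
  imports Defs
begin

lemma ideal_genI:
  assumes "finite F" "F \<subseteq> X" "\<forall>g\<in>F. r g \<in> R" "p = (\<Sum>g\<in>F. r g * g)"
  shows "p \<in> ideal_gen R X"
  unfolding ideal_gen_def using assms by (intro CollectI exI[of _ F] exI[of _ r]) (intro conjI)

lemma ideal_genE:
  assumes "p \<in> ideal_gen R X"
  obtains F r where "finite F" "F \<subseteq> X" "\<forall>g\<in>F. r g \<in> R" "p = (\<Sum>g\<in>F. r g * g)"
  using assms unfolding ideal_gen_def by (elim CollectE exE conjE) blast

lemma ig_gen: "g \<in> X \<Longrightarrow> r \<in> R \<Longrightarrow> r * g \<in> ideal_gen R X"
  by (rule ideal_genI[of "{g}" X "\<lambda>_. r"]) simp_all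

lemma ig_zero: "0 \<in> ideal_gen R X"
  by (rule ideal_genI[of "{}" X]) simp_all

lemma ig_add:
  assumes R0: "0 \<in> R" and Radd: "\<And>a b. a \<in> R \<Longrightarrow> b \<in> R \<Longrightarrow> a + b \<in> R"
    and p: "p \<in> ideal_gen R X" and q: "q \<in> ideal_gen R X"
  shows "p + q \<in> ideal_gen R X"
proof -
  obtain F1 r1 where F1: "finite F1" "F1 \<subseteq> X" "\<forall>g\<in>F1. r1 g \<in> R" "p = (\<Sum>g\<in>F1. r1 g * g)"
    using p by (rule ideal_genE)
  obtain F2 r2 where F2: "finite F2" "F2 \<subseteq> X" "\<forall>g\<in>F2. r2 g \<in> R" "q = (\<Sum>g\<in>F2. r2 g * g)"
    using q by (rule ideal_genE)
  define r where "r g = (if g \<in> F1 then r1 g else 0) + (if g \<in> F2 then r2 g else 0)" for g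
  have "(\<Sum>g\<in>F1 \<union> F2. r g * g) = (\<Sum>g\<in>F1 \<union> F2. (if g \<in> F1 then r1 g * g else 0))
      + (\<Sum>g\<in>F1 \<union> F2. (if g \<in> F2 then r2 g * g else 0))"
  proof -
    have "r g * g = (if g \<in> F1 then r1 g * g else 0) + (if g \<in> F2 then r2 g * g else 0)" for g
      by (simp add: r_def distrib_right)
    thus ?thesis by (simp add: sum.distrib)
  qed
  also have "\<dots> = p + q"
  proof -
    have i1: "(F1 \<union> F2) \<inter> F1 = F1" "(F1 \<union> F2) \<inter> F2 = F2" by blast+
    have fin: "finite (F1 \<union> F2)" using F1(1) F2(1) by blast
    show ?thesis unfolding sum.inter_restrict[OF fin, symmetric] i1 F1(4) F2(4) ..
  qed
  finally have e: "p + q = (\<Sum>g\<in>F1 \<union> F2. r g * g)" by (rule sym)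
  have rR: "\<forall>g\<in>F1 \<union> F2. r g \<in> R"
  proof
    fix g assume "g \<in> F1 \<union> F2"
    have a: "(if g \<in> F1 then r1 g else 0) \<in> R" using F1(3) R0 by simp
    have b: "(if g \<in> F2 then r2 g else 0) \<in> R" using F2(3) R0 by simp
    show "r g \<in> R" unfolding r_def by (rule Radd[OF a b])
  qed
  have "finite (F1 \<union> F2)" "F1 \<union> F2 \<subseteq> X" using F1 F2 by blast+
  thus ?thesis using rR e by (intro ideal_genI)
qed

lemma ig_mult:
  assumes Rmul: "\<And>a b. a \<in> R \<Longrightarrow> b \<in> R \<Longrightarrow> a * b \<in> R"
    and a: "a \<in> R" and p: "p \<in> ideal_gen R X"
  shows "a * p \<in> ideal_gen R X"
proof -
  obtain F r where F: "finite F" "F \<subseteq> X" "\<forall>g\<in>F. r g \<in> R" "p = (\<Sum>g\<in>F. r g * g)"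
    using p by (rule ideal_genE)
  have e: "a * p = (\<Sum>g\<in>F. (a * r g) * g)" unfolding F(4) by (simp add: sum_distrib_left mult.assoc)
  have "\<forall>g\<in>F. a * r g \<in> R" using F(3) a Rmul by blast
  thus ?thesis using F(1,2) e by (intro ideal_genI)
qed

lemma sum_closed:
  assumes "0 \<in> I" "\<And>a b. a \<in> I \<Longrightarrow> b \<in> I \<Longrightarrow> a + b \<in> I"
  shows "finite A \<Longrightarrow> (\<And>x. x \<in> A \<Longrightarrow> f x \<in> I) \<Longrightarrow> sum f A \<in> I"
  by (induction A rule: finite_induct) (auto simp: assms)

lemma ig_sub:
  assumes "0 \<in> I" "\<And>a b. a \<in> I \<Longrightarrow> b \<in> I \<Longrightarrow> a + b \<in> I"
    "\<And>a g. a \<in> R \<Longrightarrow> g \<in> X \<Longrightarrow> a * g \<in> I"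
  shows "ideal_gen R X \<subseteq> I"
proof
  fix p assume "p \<in> ideal_gen R X"
  then obtain F r where F: "finite F" "F \<subseteq> X" "\<forall>g\<in>F. r g \<in> R" "p = (\<Sum>g\<in>F. r g * g)"
    by (rule ideal_genE)
  show "p \<in> I" unfolding F(4) by (rule sum_closed[OF assms(1,2) F(1)]) (use F assms(3) in auto)
qed

lemma ig_mono: assumes "X \<subseteq> Y" shows "ideal_gen R X \<subseteq> ideal_gen R Y"
proof
  fix p assume "p \<in> ideal_gen R X"
  then obtain F r where F: "finite F" "F \<subseteq> X" "\<forall>g\<in>F. r g \<in> R" "p = (\<Sum>g\<in>F. r g * g)"
    by (rule ideal_genE)
  have "F \<subseteq> Y" using F(2) assms by blast
  thus "p \<in> ideal_gen R Y" using F by (intro ideal_genI)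
qed

lemma RG_I: "(\<And>\<alpha>. \<alpha> \<in> Poly_Mapping.keys p \<Longrightarrow> Poly_Mapping.keys \<alpha> \<subseteq> stable_sets d E) \<Longrightarrow> p \<in> RG d E"
  unfolding RG_def by (rule CollectI, rule ballI)

lemma RG_D: "p \<in> RG d E \<Longrightarrow> \<alpha> \<in> Poly_Mapping.keys p \<Longrightarrow> Poly_Mapping.keys \<alpha> \<subseteq> stable_sets d E"
  unfolding RG_def by (drule CollectD) (erule bspec)

lemma RG_zero: "0 \<in> RG d E" by (rule RG_I) simp

lemma RG_add: assumes a: "a \<in> RG d E" and b: "b \<in> RG d E" shows "a + b \<in> RG d E"
proof (rule RG_I)
  fix \<alpha> assume "\<alpha> \<in> Poly_Mapping.keys (a + b)"
  hence "\<alpha> \<in> Poly_Mapping.keys a \<or> \<alpha> \<in> Poly_Mapping.keys b" using keys_add[of a b] by blast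
  thus "Poly_Mapping.keys \<alpha> \<subseteq> stable_sets d E" using RG_D[OF a] RG_D[OF b] by blast
qed

lemma keys_add_nat: "Poly_Mapping.keys ((\<alpha>::'a \<Rightarrow>\<^sub>0 nat) + \<beta>) = Poly_Mapping.keys \<alpha> \<union> Poly_Mapping.keys \<beta>"
proof (rule set_eqI)
  fix x show "x \<in> Poly_Mapping.keys (\<alpha> + \<beta>) \<longleftrightarrow> x \<in> Poly_Mapping.keys \<alpha> \<union> Poly_Mapping.keys \<beta>"
    by (simp add: in_keys_iff lookup_add)
qed

lemma RG_mult: assumes a: "a \<in> RG d E" and b: "b \<in> RG d E" shows "a * b \<in> RG d E"
proof (rule RG_I)
  fix \<alpha> assume "\<alpha> \<in> Poly_Mapping.keys (a * b)"
  then obtain x y where xy: "\<alpha> = x + y" "x \<in> Poly_Mapping.keys a" "y \<in> Poly_Mapping.keys b"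
    using keys_mult[of a b] by blast
  have "Poly_Mapping.keys x \<subseteq> stable_sets d E" "Poly_Mapping.keys y \<subseteq> stable_sets d E"
    using RG_D[OF a xy(2)] RG_D[OF b xy(3)] .
  thus "Poly_Mapping.keys \<alpha> \<subseteq> stable_sets d E" unfolding xy(1) keys_add_nat by blast
qed

lemma RG_const: "Poly_Mapping.single 0 c \<in> RG d E"
proof -
  have "Poly_Mapping.keys (Poly_Mapping.single (0::nat set \<Rightarrow>\<^sub>0 nat) c) \<subseteq> {0}" by simp
  moreover have "Poly_Mapping.keys (0::nat set \<Rightarrow>\<^sub>0 nat) = {}" by (rule keys_zero)
  ultimately show ?thesis by (intro RG_I) auto
qed


definition mono2 :: "nat set \<Rightarrow> nat set \<Rightarrow> (nat set \<Rightarrow>\<^sub>0 nat)" where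
  "mono2 S T = Poly_Mapping.single S 1 + Poly_Mapping.single T 1"

lemma lookup_mono2: "Poly_Mapping.lookup (mono2 S T) X = (if X = S then 1 else 0) + (if X = T then 1 else 0)"
  unfolding mono2_def lookup_add lookup_single when_def by (simp only: eq_commute)

lemma var_mult: "var S * var T = Poly_Mapping.single (mono2 S T) (1::'k::comm_ring_1)"
  by (simp add: var_def mult_single mono2_def)

lemma keys_mono2: "Poly_Mapping.keys (mono2 S T) = {S, T}"
proof (rule set_eqI)
  fix X show "X \<in> Poly_Mapping.keys (mono2 S T) \<longleftrightarrow> X \<in> {S, T}"
    by (simp add: in_keys_iff lookup_mono2)
qed

lemma ws2: "(\<Sum>X\<in>Poly_Mapping.keys (mono2 S T). Poly_Mapping.lookup (mono2 S T) X * h X) = h S + h T"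
proof (cases "S = T")
  case True
  thus ?thesis by (simp add: keys_mono2 lookup_mono2)
next
  case False
  thus ?thesis by (simp add: keys_mono2 lookup_mono2)
qed

lemma mdeg_mono2: "mdeg (mono2 S T) = 2"
  using ws2[of S T "\<lambda>_. 1"] unfolding mdeg_def by simp

lemma sum_single_lookup: "finite X \<Longrightarrow> Poly_Mapping.lookup (\<Sum>i\<in>X. Poly_Mapping.single i (n::nat)) j = (if j \<in> X then n else 0)"
  by (simp add: lookup_sum lookup_single when_def)

lemma pi_exp_lookup:
  assumes "\<forall>X\<in>Poly_Mapping.keys \<alpha>. finite X"
  shows "Poly_Mapping.lookup (pi_exp \<alpha>) j =
    (\<Sum>X\<in>Poly_Mapping.keys \<alpha>. Poly_Mapping.lookup \<alpha> X * (of_bool (j = 0) + of_bool (j \<in> X)))"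
  unfolding pi_exp_def lookup_sum
  by (rule sum.cong) (use assms in \<open>auto simp: lookup_add sum_single_lookup lookup_single when_def\<close>)

lemma pi_exp_mono2:
  assumes "finite S" "finite T"
  shows "Poly_Mapping.lookup (pi_exp (mono2 S T)) j = 2 * of_bool (j = 0) + of_bool (j \<in> S) + of_bool (j \<in> T)"
proof -
  have f: "\<forall>X\<in>Poly_Mapping.keys (mono2 S T). finite X" using assms by (simp add: keys_mono2)
  have "Poly_Mapping.lookup (pi_exp (mono2 S T)) j = (of_bool (j = 0) + of_bool (j \<in> S)) + (of_bool (j = 0) + of_bool (j \<in> T))"
    unfolding pi_exp_lookup[OF f] by (rule ws2)
  thus ?thesis by simp
qed

lemma mdeg2_decomp:
  assumes "mdeg \<alpha> = 2"
  shows "\<exists>S T. \<alpha> = mono2 S T"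
proof -
  let ?K = "Poly_Mapping.keys \<alpha>" and ?l = "Poly_Mapping.lookup \<alpha>"
  have s: "sum ?l ?K = 2" using assms unfolding mdeg_def .
  have "card ?K = (\<Sum>X\<in>?K. 1)" by simp
  also have "\<dots> \<le> sum ?l ?K" by (rule sum_mono) (simp add: in_keys_iff)
  finally have c: "card ?K \<le> 2" using s by simp
  have "?K \<noteq> {}" using s by auto
  hence "card ?K \<noteq> 0" by simp
  with c consider "card ?K = 1" | "card ?K = 2" by linarith
  thus ?thesis
  proof cases
    case 1
    then obtain S where K: "?K = {S}" by (auto simp: card_Suc_eq)
    hence l2: "?l S = 2" using s by simp
    have "\<alpha> = mono2 S S"
    proof (rule poly_mapping_eqI)
      fix X show "?l X = Poly_Mapping.lookup (mono2 S S) X"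
      proof (cases "X = S")
        case True thus ?thesis using l2 by (simp add: lookup_mono2)
      next
        case False
        hence "X \<notin> ?K" using K by blast
        hence "?l X = 0" by (simp add: in_keys_iff)
        thus ?thesis using False by (simp add: lookup_mono2)
      qed
    qed
    thus ?thesis by blast
  next
    case 2
    then obtain S T where K: "?K = {S, T}" "S \<noteq> T" by (auto simp: card_2_iff)
    have "S \<in> ?K" "T \<in> ?K" using K by blast+
    hence "?l S \<noteq> 0" "?l T \<noteq> 0" by (simp_all add: in_keys_iff)
    moreover have "?l S + ?l T = 2" using s K by simp
    ultimately have l1: "?l S = 1" "?l T = 1" by linarith+
    have "\<alpha> = mono2 S T"
    proof (rule poly_mapping_eqI)
      fix X show "?l X = Poly_Mapping.lookup (mono2 S T) X"
      proof (cases "X = S")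
        case True thus ?thesis using l1 K(2) by (simp add: lookup_mono2)
      next
        case F1: False
        show ?thesis
        proof (cases "X = T")
          case True thus ?thesis using l1 K(2) by (simp add: lookup_mono2)
        next
          case False
          hence "X \<notin> ?K" using K F1 by blast
          hence "?l X = 0" by (simp add: in_keys_iff)
          thus ?thesis using False F1 by (simp add: lookup_mono2)
        qed
      qed
    qed
    thus ?thesis by blast
  qed
qed

lemma single_sum: "(\<Sum>a\<in>A. Poly_Mapping.single k (f a)) = Poly_Mapping.single k (sum f A)"
  by (induction A rule: infinite_finite_induct) (auto simp: single_add)

lemma poly_expand: "p = (\<Sum>\<alpha>\<in>Poly_Mapping.keys p. Poly_Mapping.single \<alpha> (Poly_Mapping.lookup p \<alpha>))"
  by (rule poly_mapping_eqI) (auto simp: lookup_sum lookup_single when_def in_keys_iff)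

lemma piG_sum:
  assumes "finite K" "Poly_Mapping.keys p \<subseteq> K"
  shows "piG p = (\<Sum>\<alpha>\<in>K. Poly_Mapping.single (pi_exp \<alpha>) (Poly_Mapping.lookup p \<alpha>))"
  unfolding piG_def
  by (rule sum.mono_neutral_left) (use assms in \<open>auto simp: in_keys_iff\<close>)

lemma lookup_piG:
  "Poly_Mapping.lookup (piG p) e = (\<Sum>\<alpha>\<in>{\<alpha>\<in>Poly_Mapping.keys p. pi_exp \<alpha> = e}. Poly_Mapping.lookup p \<alpha>)"
  unfolding piG_def lookup_sum by (simp add: lookup_single when_def sum.inter_filter)


lemma stable_fin: "S \<in> stable_sets d E \<Longrightarrow> finite S"
  unfolding stable_sets_def by (auto intro: finite_subset)

lemma stable_0: "S \<in> stable_sets d E \<Longrightarrow> 0 \<notin> S"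
  unfolding stable_sets_def by auto

lemma pe_disj:
  assumes "S \<in> stable_sets d E" "T \<in> stable_sets d E" "S \<inter> T = {}"
  shows "Poly_Mapping.lookup (pi_exp (mono2 S T)) j = 2 * of_bool (j = 0) + of_bool (j \<in> S \<union> T)"
proof -
  have "(of_bool (j \<in> S) + of_bool (j \<in> T) :: nat) = of_bool (j \<in> S \<union> T)"
    using assms(3) by (cases "j \<in> S"; cases "j \<in> T") auto
  thus ?thesis using pi_exp_mono2[OF stable_fin[OF assms(1)] stable_fin[OF assms(2)], of j] by simp
qed

lemma pe_union:
  assumes "S \<in> stable_sets d E" "T \<in> stable_sets d E" "S \<inter> T = {}"
    "S' \<in> stable_sets d E" "T' \<in> stable_sets d E" "S' \<inter> T' = {}"
  shows "pi_exp (mono2 S T) = pi_exp (mono2 S' T') \<longleftrightarrow> S \<union> T = S' \<union> T'"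
proof
  assume h: "pi_exp (mono2 S T) = pi_exp (mono2 S' T')"
  have "of_bool (j \<in> S \<union> T) = (of_bool (j \<in> S' \<union> T') :: nat)" for j
    using arg_cong[OF h, of "\<lambda>m. Poly_Mapping.lookup m j"] pe_disj[OF assms(1-3), of j] pe_disj[OF assms(4-6), of j]
    by simp
  hence "(j \<in> S \<union> T) = (j \<in> S' \<union> T')" for j by (simp only: of_bool_eq_iff)
  thus "S \<union> T = S' \<union> T'" by (rule set_eqI)
next
  assume "S \<union> T = S' \<union> T'"
  thus "pi_exp (mono2 S T) = pi_exp (mono2 S' T')"
    by (intro poly_mapping_eqI) (simp add: pe_disj[OF assms(1-3)] pe_disj[OF assms(4-6)])
qed

lemma pe_sep:
  assumes "S \<in> stable_sets d E" "T \<in> stable_sets d E" "S \<inter> T = {}"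
    "S' \<in> stable_sets d E" "T' \<in> stable_sets d E" "S' \<inter> T' \<noteq> {}"
  shows "pi_exp (mono2 S T) \<noteq> pi_exp (mono2 S' T')"
proof
  assume h: "pi_exp (mono2 S T) = pi_exp (mono2 S' T')"
  obtain j where j: "j \<in> S'" "j \<in> T'" using assms(6) by blast
  have j0: "j \<noteq> 0"
  proof
    assume "j = 0" thus False using j(1) stable_0[OF assms(4)] by simp
  qed
  have "Poly_Mapping.lookup (pi_exp (mono2 S' T')) j = 2"
    using pi_exp_mono2[of S' T' j] stable_fin[OF assms(4)] stable_fin[OF assms(5)] j j0 by simp
  moreover have "Poly_Mapping.lookup (pi_exp (mono2 S T)) j \<le> 1"
    using pe_disj[OF assms(1-3), of j] j0 by simp
  ultimately show False using h by simp
qed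

definition genJ :: "nat \<Rightarrow> nat set set \<Rightarrow> 'k::comm_ring_1 mpoly_sets set" where
  "genJ d E = {var S1 * var S2 - var S3 * var S4 | S1 S2 S3 S4.
        S1 \<in> stable_sets d E \<and> S2 \<in> stable_sets d E \<and> S3 \<in> stable_sets d E \<and> S4 \<in> stable_sets d E
        \<and> S1 \<inter> S2 = {} \<and> S3 \<inter> S4 = {} \<and> S1 \<union> S2 = S3 \<union> S4}"

definition genM :: "nat \<Rightarrow> nat set set \<Rightarrow> 'k::comm_ring_1 mpoly_sets set" where
  "genM d E = {var S * var T | S T. S \<in> stable_sets d E \<and> T \<in> stable_sets d E \<and> S \<inter> T \<noteq> {}}"

lemma JG_eq: "JG d E = ideal_gen (RG d E) (genJ d E)" unfolding JG_def genJ_def by simp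
lemma MG_eq: "MG d E = ideal_gen (RG d E) (genM d E)" unfolding MG_def genM_def by simp

lemma genJ_IG2:
  assumes "g \<in> (genJ d E :: 'k::comm_ring_1 mpoly_sets set)"
  shows "g \<in> {p \<in> IG d E. homogeneous_of 2 p}"
proof -
  obtain S1 S2 S3 S4 where st: "S1 \<in> stable_sets d E" "S2 \<in> stable_sets d E" "S3 \<in> stable_sets d E" "S4 \<in> stable_sets d E"
     "S1 \<inter> S2 = {}" "S3 \<inter> S4 = {}" "S1 \<union> S2 = S3 \<union> S4" and g: "g = var S1 * var S2 - var S3 * var S4"
    using assms unfolding genJ_def by blast
  define a where "a = mono2 S1 S2"
  define b where "b = mono2 S3 S4"
  have g': "g = Poly_Mapping.single a 1 - Poly_Mapping.single b 1" unfolding g a_def b_def var_mult ..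
  have kg: "Poly_Mapping.keys g \<subseteq> {a, b}" unfolding g' using keys_diff[of "Poly_Mapping.single a (1::'k)" "Poly_Mapping.single b 1"]
    by auto
  have "g \<in> RG d E" unfolding RG_def
  proof (rule CollectI, rule ballI)
    fix \<alpha> assume "\<alpha> \<in> Poly_Mapping.keys g"
    hence "\<alpha> = a \<or> \<alpha> = b" using kg by blast
    thus "Poly_Mapping.keys \<alpha> \<subseteq> stable_sets d E"
    proof
      assume "\<alpha> = a" thus ?thesis using st by (simp add: a_def keys_mono2)
    next
      assume "\<alpha> = b" thus ?thesis using st by (simp add: b_def keys_mono2)
    qed
  qed
  moreover have "homogeneous_of 2 g" unfolding homogeneous_of_def using kg by (auto simp: a_def b_def mdeg_mono2)
  moreover have "piG g = 0"
  proof (cases "a = b")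
    case True
    then show ?thesis by (simp add: g' piG_def)
  next
    case False
    have pe: "pi_exp a = pi_exp b" unfolding a_def b_def using pe_union[OF st(1,2,5,3,4,6)] st(7) by simp
    have "piG g = (\<Sum>\<alpha>\<in>{a,b}. Poly_Mapping.single (pi_exp \<alpha>) (Poly_Mapping.lookup g \<alpha>))"
      by (rule piG_sum) (use kg in auto)
    also have "\<dots> = Poly_Mapping.single (pi_exp a) 1 + Poly_Mapping.single (pi_exp a) (-1)"
      using False pe by (simp add: g' lookup_minus lookup_single when_def)
    also have "\<dots> = 0" by (simp add: single_add[symmetric])
    finally show ?thesis .
  qed
  ultimately show ?thesis unfolding IG_def by simp
qed



lemma JG_add: "a \<in> JG d E \<Longrightarrow> b \<in> JG d E \<Longrightarrow> a + b \<in> JG d E"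
  unfolding JG_eq by (rule ig_add[where R="RG d E"], rule RG_zero, erule (1) RG_add)
lemma MG_add: "a \<in> MG d E \<Longrightarrow> b \<in> MG d E \<Longrightarrow> a + b \<in> MG d E"
  unfolding MG_eq by (rule ig_add[where R="RG d E"], rule RG_zero, erule (1) RG_add)
lemma JG_mult: "r \<in> RG d E \<Longrightarrow> a \<in> JG d E \<Longrightarrow> r * a \<in> JG d E"
  unfolding JG_eq by (rule ig_mult[where R="RG d E"], erule (1) RG_mult)
lemma MG_mult: "r \<in> RG d E \<Longrightarrow> a \<in> MG d E \<Longrightarrow> r * a \<in> MG d E"
  unfolding MG_eq by (rule ig_mult[where R="RG d E"], erule (1) RG_mult)
lemma JG_zero: "0 \<in> JG d E" unfolding JG_eq by (rule ig_zero)
lemma MG_zero: "0 \<in> MG d E" unfolding MG_eq by (rule ig_zero)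

lemma ideal_sumI: "a \<in> I \<Longrightarrow> b \<in> J \<Longrightarrow> a + b \<in> ideal_sum I J"
  unfolding ideal_sum_def by blast

lemma ideal_sumE: "x \<in> ideal_sum I J \<Longrightarrow> (\<And>a b. x = a + b \<Longrightarrow> a \<in> I \<Longrightarrow> b \<in> J \<Longrightarrow> P) \<Longrightarrow> P"
  unfolding ideal_sum_def by blast

lemma KG_zero: "0 \<in> KG d E"
  unfolding KG_def using ideal_sumI[OF JG_zero MG_zero] by simp

lemma KG_add: "a \<in> KG d E \<Longrightarrow> b \<in> KG d E \<Longrightarrow> a + b \<in> KG d E"
proof -
  assume "a \<in> KG d E" "b \<in> KG d E"
  then obtain a1 a2 b1 b2 where "a = a1 + a2" "b = b1 + b2" "a1 \<in> JG d E" "b1 \<in> JG d E" "a2 \<in> MG d E" "b2 \<in> MG d E"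
    unfolding KG_def by (auto elim!: ideal_sumE)
  moreover have "a + b = (a1 + b1) + (a2 + b2)" unfolding calculation(1,2) by (simp add: add_ac)
  ultimately show ?thesis unfolding KG_def by (metis ideal_sumI JG_add MG_add)
qed

lemma KG_mult: "r \<in> RG d E \<Longrightarrow> a \<in> KG d E \<Longrightarrow> r * a \<in> KG d E"
proof -
  assume r: "r \<in> RG d E" and "a \<in> KG d E"
  then obtain a1 a2 where "a = a1 + a2" "a1 \<in> JG d E" "a2 \<in> MG d E"
    unfolding KG_def by (auto elim!: ideal_sumE)
  moreover have "r * a = r * a1 + r * a2" unfolding calculation(1) by (simp add: distrib_left)
  ultimately show ?thesis unfolding KG_def by (metis ideal_sumI JG_mult MG_mult r)
qed

lemma JG_sub: "JG d E \<subseteq> KG d E"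
  unfolding KG_def using ideal_sumI[OF _ MG_zero] by fastforce
lemma MG_sub: "MG d E \<subseteq> KG d E"
  unfolding KG_def using ideal_sumI[OF JG_zero] by fastforce

lemma mono_const: "Poly_Mapping.single \<alpha> c = Poly_Mapping.single 0 c * Poly_Mapping.single \<alpha> (1::'k::comm_ring_1)"
  by (simp add: mult_single)

lemma key:
  fixes p :: "'k::field mpoly_sets"
  assumes pI: "p \<in> IG d E" and ph: "homogeneous_of 2 p"
  shows "p \<in> KG d E"
proof -
  let ?st = "stable_sets d E"
  let ?c = "Poly_Mapping.lookup p"
  have pR: "p \<in> RG d E" and p0: "piG p = 0" using pI unfolding IG_def by simp_all
  define D where "D \<alpha> \<longleftrightarrow> (\<exists>S T. \<alpha> = mono2 S T \<and> S \<in> ?st \<and> T \<in> ?st \<and> S \<inter> T = {})" for \<alpha>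
  have dec: "\<exists>S T. \<alpha> = mono2 S T \<and> S \<in> ?st \<and> T \<in> ?st" if ak: "\<alpha> \<in> Poly_Mapping.keys p" for \<alpha>
  proof -
    have "mdeg \<alpha> = 2" using ph ak unfolding homogeneous_of_def by blast
    then obtain S T where "\<alpha> = mono2 S T" using mdeg2_decomp by blast
    moreover have "Poly_Mapping.keys \<alpha> \<subseteq> ?st" using RG_D[OF pR ak] .
    ultimately have "S \<in> ?st" "T \<in> ?st" by (simp_all add: keys_mono2)
    with \<open>\<alpha> = mono2 S T\<close> show ?thesis by blast
  qed
  have nD: "\<exists>S T. \<alpha> = mono2 S T \<and> S \<in> ?st \<and> T \<in> ?st \<and> S \<inter> T \<noteq> {}"
    if ak: "\<alpha> \<in> Poly_Mapping.keys p" and nd: "\<not> D \<alpha>" for \<alpha>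
  proof -
    obtain S T where st: "\<alpha> = mono2 S T" "S \<in> ?st" "T \<in> ?st" using dec[OF ak] by blast
    have "S \<inter> T \<noteq> {}"
    proof
      assume "S \<inter> T = {}"
      hence "D \<alpha>" unfolding D_def using st by blast
      with nd show False by simp
    qed
    thus ?thesis using st by blast
  qed
  have sepD: "D \<alpha>" if h1: "D \<beta>" and h2: "\<alpha> \<in> Poly_Mapping.keys p" and h3: "pi_exp \<alpha> = pi_exp \<beta>" for \<alpha> \<beta>
  proof (rule ccontr)
    assume "\<not> D \<alpha>"
    then obtain S' T' where a: "\<alpha> = mono2 S' T'" "S' \<in> ?st" "T' \<in> ?st" "S' \<inter> T' \<noteq> {}" using nD[OF h2] by blast
    obtain S T where b: "\<beta> = mono2 S T" "S \<in> ?st" "T \<in> ?st" "S \<inter> T = {}" using h1 unfolding D_def by blast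
    show False using pe_sep[OF b(2-4) a(2-4)] h3 a(1) b(1) by simp
  qed
  define A where "A = {\<alpha> \<in> Poly_Mapping.keys p. D \<alpha>}"
  define B where "B = {\<alpha> \<in> Poly_Mapping.keys p. \<not> D \<alpha>}"
  let ?f = "\<lambda>\<alpha>. Poly_Mapping.single \<alpha> (?c \<alpha>)"
  have finA: "finite A" and finB: "finite B" unfolding A_def B_def by simp_all
  have "p = sum ?f (Poly_Mapping.keys p)" by (rule poly_expand)
  also have "Poly_Mapping.keys p = A \<union> B" unfolding A_def B_def by blast
  also have "sum ?f (A \<union> B) = sum ?f A + sum ?f B"
  proof -
    have "A \<inter> B = {}" unfolding A_def B_def by blast
    thus ?thesis by (rule sum.union_disjoint[OF finA finB])
  qed
  finally have pAB: "p = sum ?f A + sum ?f B" .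
  have "sum ?f B \<in> MG d E"
  proof (rule sum_closed[OF MG_zero MG_add finB])
    fix \<alpha> assume "\<alpha> \<in> B"
    then obtain S T where a: "\<alpha> = mono2 S T" "S \<in> ?st" "T \<in> ?st" "S \<inter> T \<noteq> {}" using nD unfolding B_def by blast
    have eq: "?f \<alpha> = Poly_Mapping.single 0 (?c \<alpha>) * (var S * var T)"
      by (subst mono_const) (simp add: a(1) var_mult)
    have gm: "var S * var T \<in> genM d E" unfolding genM_def using a by blast
    have "Poly_Mapping.single 0 (?c \<alpha>) * (var S * var T) \<in> MG d E"
      unfolding MG_eq by (rule ig_gen[OF gm RG_const])
    thus "?f \<alpha> \<in> MG d E" by (subst eq)
  qed
  moreover have "sum ?f A \<in> JG d E"
  proof -
    have "sum ?f A = (\<Sum>e\<in>pi_exp ` A. \<Sum>\<alpha>\<in>{\<alpha>\<in>A. pi_exp \<alpha> = e}. ?f \<alpha>)"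
      by (rule sum.group[symmetric, OF finA]) (simp_all add: finA)
    also have "\<dots> \<in> JG d E"
    proof (rule sum_closed[OF JG_zero JG_add])
      show "finite (pi_exp ` A)" using finA by simp
    next
      fix e assume "e \<in> pi_exp ` A"
      then obtain \<beta> where \<beta>: "\<beta> \<in> A" "e = pi_exp \<beta>" by blast
      define C where "C = {\<alpha>\<in>A. pi_exp \<alpha> = e}"
      have finC: "finite C" using finA unfolding C_def by simp
      have DB: "D \<beta>" using \<beta>(1) unfolding A_def by simp
      have C': "C = {\<alpha>\<in>Poly_Mapping.keys p. pi_exp \<alpha> = pi_exp \<beta>}"
      proof (rule set_eqI)
        fix \<alpha> show "\<alpha> \<in> C \<longleftrightarrow> \<alpha> \<in> {\<alpha>\<in>Poly_Mapping.keys p. pi_exp \<alpha> = pi_exp \<beta>}"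
          unfolding C_def A_def \<beta>(2) using sepD[OF DB, of \<alpha>] by auto
      qed
      have c0: "sum ?c C = 0" using lookup_piG[of p "pi_exp \<beta>"] p0 C' by simp
      obtain S T where b: "\<beta> = mono2 S T" "S \<in> ?st" "T \<in> ?st" "S \<inter> T = {}" using \<beta>(1) unfolding A_def D_def by blast
      have "(\<Sum>\<alpha>\<in>C. ?f \<alpha>) = (\<Sum>\<alpha>\<in>C. ?f \<alpha> - Poly_Mapping.single \<beta> (?c \<alpha>)) + (\<Sum>\<alpha>\<in>C. Poly_Mapping.single \<beta> (?c \<alpha>))"
        by (simp add: sum.distrib[symmetric])
      also have "(\<Sum>\<alpha>\<in>C. Poly_Mapping.single \<beta> (?c \<alpha>)) = 0" by (simp add: single_sum c0)
      finally have eq: "(\<Sum>\<alpha>\<in>C. ?f \<alpha>) = (\<Sum>\<alpha>\<in>C. ?f \<alpha> - Poly_Mapping.single \<beta> (?c \<alpha>))" by simp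
      have "(\<Sum>\<alpha>\<in>C. ?f \<alpha> - Poly_Mapping.single \<beta> (?c \<alpha>)) \<in> JG d E"
      proof (rule sum_closed[OF JG_zero JG_add finC])
        fix \<alpha> assume "\<alpha> \<in> C"
        hence aA: "\<alpha> \<in> A" and pe: "pi_exp \<alpha> = pi_exp \<beta>" using \<beta> unfolding C_def by auto
        obtain S' T' where a: "\<alpha> = mono2 S' T'" "S' \<in> ?st" "T' \<in> ?st" "S' \<inter> T' = {}" using aA unfolding A_def D_def by blast
        have U: "S' \<union> T' = S \<union> T" using pe_union[OF a(2-4) b(2-4)] pe a(1) b(1) by simp
        have eq: "?f \<alpha> - Poly_Mapping.single \<beta> (?c \<alpha>) = Poly_Mapping.single 0 (?c \<alpha>) * (var S' * var T' - var S * var T)"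
          by (simp add: var_mult mult_single right_diff_distrib a(1) b(1))
        have gj: "var S' * var T' - var S * var T \<in> genJ d E" unfolding genJ_def using a b U by blast
        have "Poly_Mapping.single 0 (?c \<alpha>) * (var S' * var T' - var S * var T) \<in> JG d E"
          unfolding JG_eq by (rule ig_gen[OF gj RG_const])
        thus "?f \<alpha> - Poly_Mapping.single \<beta> (?c \<alpha>) \<in> JG d E" by (subst eq)
      qed
      thus "(\<Sum>\<alpha>\<in>{\<alpha>\<in>A. pi_exp \<alpha> = e}. ?f \<alpha>) \<in> JG d E" using eq unfolding C_def by simp
    qed
    finally show ?thesis .
  qed
  ultimately have "sum ?f A + sum ?f B \<in> KG d E" unfolding KG_def by (intro ideal_sumI)
  thus ?thesis by (subst pAB)
qed

theorem corollary6p2: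
  fixes d :: nat and E :: "nat set set"
  assumes "simple_graph_on d E"
  shows "(KG d E :: 'k::field mpoly_sets set) =
         ideal_sum (ideal_gen (RG d E) {p \<in> IG d E. homogeneous_of 2 p}) (MG d E)"
proof
  show "(KG d E :: 'k::field mpoly_sets set) \<subseteq> ideal_sum (ideal_gen (RG d E) {p \<in> IG d E. homogeneous_of 2 p}) (MG d E)"
  proof -
    have "JG d E \<subseteq> (ideal_gen (RG d E) {p \<in> IG d E. homogeneous_of 2 p} :: 'k mpoly_sets set)"
      unfolding JG_eq by (rule ig_mono) (use genJ_IG2 in blast)
    thus ?thesis unfolding KG_def by (auto elim!: ideal_sumE intro!: ideal_sumI)
  qed
next
  show "ideal_sum (ideal_gen (RG d E) {p \<in> IG d E. homogeneous_of 2 p}) (MG d E) \<subseteq> (KG d E :: 'k::field mpoly_sets set)"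
  proof
    fix x :: "'k mpoly_sets"
    assume "x \<in> ideal_sum (ideal_gen (RG d E) {p \<in> IG d E. homogeneous_of 2 p}) (MG d E)"
    then obtain a b where x: "x = a + b" and a: "a \<in> ideal_gen (RG d E) {p \<in> IG d E. homogeneous_of 2 p}" and b: "b \<in> MG d E"
      by (auto elim!: ideal_sumE)
    have "ideal_gen (RG d E) {p \<in> IG d E. homogeneous_of 2 p} \<subseteq> (KG d E :: 'k mpoly_sets set)"
      by (rule ig_sub, rule KG_zero, rule KG_add, assumption, assumption, rule KG_mult, assumption, rule key, auto)
    hence "a \<in> KG d E" using a by blast
    thus "x \<in> KG d E" using x b MG_sub KG_add by blast
  qed
qed

end
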